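(* Let $0<p_1\le p_0\le\infty$ and $0<q_0<q_1\le\infty$, with $(p_0,p_1)\notin\{\infty\}\times(0,\infty)$. Then for every integer $A\ge0$ the embedding $$\ell^{q_0}\big(2^{-j/p_0}\cdot\ell^{p_0}\{1,\dots,2^j\}\big)_{j=A}^\infty\hookrightarrow\ell^{q_1}\big(2^{-j/p_1}\cdot\ell^{p_1}\{1,\dots,2^j\}\big)_{j=A}^\infty$$ is not finitely strictly singular.
   Context: For quasi-normed spaces $X_j$ and $q\in(0,\infty]$, $\ell^q(X_j)_{j=A}^\infty$ is the space of sequences $x=(x_j)_{j\ge A}$, $x_j\in X_j$, with $\|x\|=(\sum_j\|x_j\|_{X_j}^q)^{1/q}<\infty$ (supremum if $q=\infty$). For $\lambda>0$, $\lambda\cdot\ell^p\{1,\dots,N\}$ denotes $\mathbb{R}^N$ with quasi-norm $\lambda\|y\|_{\ell^p}$ (with the convention $2^{-j/\infty}=1$). Bernstein numbers: $b_n(T)=\sup\{\inf_{x\in X_n,\|x\|=1}\|Tx\|:\dim X_n=n\}$; $T$ is finitely strictly singular if $b_n(T)\to0$. *)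

theory Defs
  imports "HOL-Analysis.Analysis"
begin

text \<open>Exponents p, q range over (0, \<infinity>]; they are represented as extended reals.
  Elements of the mixed sequence spaces are represented as x :: nat \<Rightarrow> nat \<Rightarrow> real,
  where x j is the j-th block (a vector in R^(2^j), coordinates indexed by 0..<2^j).\<close>

definition lp_norm :: "ereal \<Rightarrow> nat \<Rightarrow> (nat \<Rightarrow> real) \<Rightarrow> real" where
  "lp_norm p N y =
     (if p = \<infinity> then Max (insert 0 ((\<lambda>i. \<bar>y i\<bar>) ` {..<N}))
      else (\<Sum>i<N. \<bar>y i\<bar> powr real_of_ereal p) powr (1 / real_of_ereal p))"

definition block_norm :: "ereal \<Rightarrow> nat \<Rightarrow> (nat \<Rightarrow> real) \<Rightarrow> real" where
  "block_norm p j y =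
     (if p = \<infinity> then 1 else 2 powr (- real j / real_of_ereal p)) * lp_norm p (2 ^ j) y"

definition mixed_space :: "ereal \<Rightarrow> ereal \<Rightarrow> nat \<Rightarrow> (nat \<Rightarrow> nat \<Rightarrow> real) set" where
  "mixed_space p q A =
     {x. (\<forall>j i. (j < A \<or> 2 ^ j \<le> i) \<longrightarrow> x j i = 0) \<and>
         (if q = \<infinity> then bdd_above {block_norm p j (x j) | j. A \<le> j}
          else summable (\<lambda>j. block_norm p (j + A) (x (j + A)) powr real_of_ereal q))}"

definition mixed_norm :: "ereal \<Rightarrow> ereal \<Rightarrow> nat \<Rightarrow> (nat \<Rightarrow> nat \<Rightarrow> real) \<Rightarrow> ereal" where
  "mixed_norm p q A x =
     (if x \<in> mixed_space p q A then
        ereal (if q = \<infinity> then Sup {block_norm p j (x j) | j. A \<le> j}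
               else (\<Sum>j. block_norm p (j + A) (x (j + A)) powr real_of_ereal q)
                      powr (1 / real_of_ereal q))
      else \<infinity>)"

definition lin_subspace_dim :: "(nat \<Rightarrow> nat \<Rightarrow> real) set \<Rightarrow> nat \<Rightarrow> bool" where
  "lin_subspace_dim X n \<longleftrightarrow>
     (\<exists>v :: nat \<Rightarrow> nat \<Rightarrow> nat \<Rightarrow> real.
        (\<forall>c. (\<forall>j i. (\<Sum>k<n. c k * v k j i) = 0) \<longrightarrow> (\<forall>k<n. c k = 0)) \<and>
        X = {(\<lambda>j i. \<Sum>k<n. c k * v k j i) | c. True})"

definition bernstein ::
  "(nat \<Rightarrow> nat \<Rightarrow> real) set \<Rightarrow> ((nat \<Rightarrow> nat \<Rightarrow> real) \<Rightarrow> ereal) \<Rightarrow> ('b \<Rightarrow> ereal)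
     \<Rightarrow> ((nat \<Rightarrow> nat \<Rightarrow> real) \<Rightarrow> 'b) \<Rightarrow> nat \<Rightarrow> ereal" where
  "bernstein D nD nR T n =
     (SUP X \<in> {X. X \<subseteq> D \<and> lin_subspace_dim X n}. INF x \<in> {x \<in> X. nD x = 1}. nR (T x))"

definition finitely_strictly_singular ::
  "(nat \<Rightarrow> nat \<Rightarrow> real) set \<Rightarrow> ((nat \<Rightarrow> nat \<Rightarrow> real) \<Rightarrow> ereal) \<Rightarrow> ('b \<Rightarrow> ereal)
     \<Rightarrow> ((nat \<Rightarrow> nat \<Rightarrow> real) \<Rightarrow> 'b) \<Rightarrow> bool" where
  "finitely_strictly_singular D nD nR T \<longleftrightarrow> (bernstein D nD nR T \<longlonglongrightarrow> 0)"

end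

theory Submission
  imports Defs "HOL-Probability.Hoeffding"
begin


definition rad :: "nat \<Rightarrow> nat \<Rightarrow> real" where
  "rad k i = (if odd (i div 2^k) then -1 else 1)"

lemma div_add_pow2:
  assumes "k \<le> J"
  shows "((i::nat) + 2^J) div 2^k = i div 2^k + 2^(J-k)"
proof -
  have "2^J = (2::nat)^k * 2^(J-k)" using assms by (simp add: power_add[symmetric])
  then show ?thesis by simp
qed

lemma sum_prod_bits:
  fixes G :: "nat \<Rightarrow> bool \<Rightarrow> real"
  shows "(\<Sum>i<(2::nat)^J. \<Prod>k<J. G k (odd (i div 2^k))) = (\<Prod>k<J. G k False + G k True)"
proof (induction J)
  case 0
  then show ?case by (simp add: card_lessThan)
next
  case (Suc J)
  define h where "h i = (\<Prod>k<J. G k (odd (i div 2^k)))" for i :: nat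
  have split: "(\<Sum>i<(2::nat)^Suc J. F i) = (\<Sum>i<2^J. F i) + (\<Sum>i<2^J. F (i + 2^J))" for F :: "nat \<Rightarrow> real"
  proof -
    have "(\<Sum>i<2^Suc J. F i) = (\<Sum>i<2^J + 2^J. F i)" by (simp add: mult_2)
    also have "\<dots> = sum F {0..<2^J} + sum F {2^J..<2^J+2^J}"
      by (simp add: sum.atLeastLessThan_concat lessThan_atLeast0)
    also have "sum F {2^J..<2^J+2^J} = sum (\<lambda>i. F (i + 2^J)) {0..<2^J}"
      using sum.shift_bounds_nat_ivl[of F 0 "2^J" "2^J"] by simp
    finally show ?thesis by (simp add: lessThan_atLeast0)
  qed
  have lo: "(\<Prod>k<Suc J. G k (odd (i div 2^k))) = h i * G J False" if "i < 2^J" for i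
    using that by (simp add: h_def)
  have hi: "(\<Prod>k<Suc J. G k (odd ((i + 2^J) div 2^k))) = h i * G J True" if "i < 2^J" for i
  proof -
    have "(\<Prod>k<J. G k (odd ((i + 2^J) div 2^k))) = h i"
      unfolding h_def
    proof (rule prod.cong[OF refl])
      fix k assume "k \<in> {..<J}"
      then have "k \<le> J" "J - k \<noteq> 0" by auto
      then show "G k (odd ((i + 2 ^ J) div 2 ^ k)) = G k (odd (i div 2 ^ k))"
        by (simp add: div_add_pow2)
    qed
    moreover have "(i + 2^J) div 2^J = 1" using that by simp
    ultimately show ?thesis by simp
  qed
  have "(\<Sum>i<(2::nat)^Suc J. \<Prod>k<Suc J. G k (odd (i div 2^k)))
      = (\<Sum>i<2^J. h i * G J False) + (\<Sum>i<2^J. h i * G J True)"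
  proof -
    have a: "(\<Sum>i<(2::nat)^J. \<Prod>k<Suc J. G k (odd (i div 2^k))) = (\<Sum>i<2^J. h i * G J False)"
      by (rule sum.cong[OF refl]) (rule lo, simp)
    have b: "(\<Sum>i<(2::nat)^J. \<Prod>k<Suc J. G k (odd ((i + 2^J) div 2^k))) = (\<Sum>i<2^J. h i * G J True)"
      by (rule sum.cong[OF refl]) (rule hi, simp)
    show ?thesis unfolding split a b ..
  qed
  also have "\<dots> = (\<Sum>i<2^J. h i) * (G J False + G J True)"
    by (simp add: sum_distrib_right distrib_left)
  finally show ?case using Suc by (simp add: h_def)
qed


definition sg :: "bool \<Rightarrow> real" where "sg b = (if b then -1 else 1)"

lemma rad_sg: "rad k i = sg (odd (i div 2^k))"
  by (simp add: rad_def sg_def)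

lemma sg_sq: "sg b * sg b = 1" by (simp add: sg_def)

lemma rad_orth:
  assumes "k < J" "l < J"
  shows "(\<Sum>i<(2::nat)^J. rad k i * rad l i) = (if k = l then 2^J else 0)"
proof -
  define G where "G m b = (if m = k then sg b else 1) * (if m = l then sg b else 1)" for m b
  have "rad k i * rad l i = (\<Prod>m<J. G m (odd (i div 2^m)))" for i
    using assms by (simp add: G_def prod.distrib rad_sg)
  then have "(\<Sum>i<(2::nat)^J. rad k i * rad l i) = (\<Prod>m<J. G m False + G m True)"
    by (simp add: sum_prod_bits)
  also have "\<dots> = (if k = l then 2^J else 0)"
  proof (cases "k = l")
    case True
    then have "G m False + G m True = 2" for m by (simp add: G_def sg_def)
    then show ?thesis using True by simp
  next
    case False
    have "G k False + G k True = 0" using False by (simp add: G_def sg_def)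
    then have "(\<Prod>m<J. G m False + G m True) = 0"
      using assms by (metis finite_lessThan lessThan_iff prod_zero_iff)
    then show ?thesis using False by simp
  qed
  finally show ?thesis .
qed

lemma rad_sq_sum:
  "(\<Sum>i<(2::nat)^J. (\<Sum>k<J. c k * rad k i)^2) = 2^J * (\<Sum>k<J. (c k)^2)"
proof -
  have "(\<Sum>i<(2::nat)^J. (\<Sum>k<J. c k * rad k i)^2)
      = (\<Sum>i<(2::nat)^J. \<Sum>k<J. \<Sum>l<J. c k * c l * (rad k i * rad l i))"
    by (simp add: power2_eq_square sum_product algebra_simps)
  also have "\<dots> = (\<Sum>k<J. \<Sum>l<J. c k * c l * (\<Sum>i<(2::nat)^J. rad k i * rad l i))"
    by (subst sum.swap, rule sum.cong[OF refl], subst sum.swap, simp add: sum_distrib_left)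
  also have "\<dots> = (\<Sum>k<J. \<Sum>l<J. c k * c l * (if k = l then 2^J else 0))"
    by (intro sum.cong refl) (simp add: rad_orth)
  also have "\<dots> = (\<Sum>k<J. \<Sum>l<J. (if k = l then c k * c k * 2^J else 0))"
    by (intro sum.cong refl) auto
  also have "\<dots> = (\<Sum>k<J. c k * c k * 2^J)"
    by (intro sum.cong refl) (subst sum.delta', auto)
  also have "\<dots> = 2^J * (\<Sum>k<J. (c k)^2)"
    by (simp add: sum_distrib_left power2_eq_square mult.commute)
  finally show ?thesis .
qed

lemma rad_exp_sum:
  "(\<Sum>i<(2::nat)^J. exp (t * (\<Sum>k<J. c k * rad k i))) = (\<Prod>k<J. exp (t * c k) + exp (- (t * c k)))"
proof -
  define G where "G k b = exp (t * c k * sg b)" for k b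
  have "exp (t * (\<Sum>k<J. c k * rad k i)) = (\<Prod>k<J. G k (odd (i div 2^k)))" for i
    by (simp add: G_def exp_sum[symmetric] sum_distrib_left rad_sg mult.assoc)
  then have "(\<Sum>i<(2::nat)^J. exp (t * (\<Sum>k<J. c k * rad k i))) = (\<Prod>k<J. G k False + G k True)"
    by (simp add: sum_prod_bits)
  then show ?thesis by (simp add: G_def sg_def)
qed

lemma cosh_bound: "exp (u::real) + exp (-u) \<le> 2 * exp (u^2 / 2)"
proof -
  define a where "a = \<bar>u\<bar>"
  have a0: "a \<ge> 0" by (simp add: a_def)
  have sym: "exp u + exp (-u) = exp a + exp (-a)" by (auto simp: a_def abs_if)
  have "-(2*a) * (1/2) + ln (1 + (1/2) * (exp (2*a) - 1)) \<le> (2*a)^2 / 8"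
    using Hoeffdings_lemma_aux[of "2*a" "1/2"] a0 by simp
  then have "ln ((1 + exp (2*a)) / 2) \<le> a + a^2/2"
    by (simp add: field_simps power2_eq_square)
  then have "(1 + exp (2*a)) / 2 \<le> exp (a + a^2/2)"
    by (metis exp_le_cancel_iff exp_ln add_pos_pos zero_less_one exp_gt_zero half_gt_zero)
  then have "exp (-a) * ((1 + exp (2*a)) / 2) \<le> exp (-a) * exp (a + a^2/2)"
    by (intro mult_left_mono) auto
  moreover have "exp (-a) * ((1 + exp (2*a)) / 2) = (exp a + exp (-a)) / 2"
    by (simp add: field_simps exp_add[symmetric] exp_minus_inverse)
  moreover have "exp (-a) * exp (a + a^2/2) = exp (a^2/2)"
    by (simp add: exp_add[symmetric])
  ultimately have "exp a + exp (-a) \<le> 2 * exp (a^2/2)" by simp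
  then show ?thesis using sym by (simp add: a_def)
qed

lemma rad_exp_bound:
  "(\<Sum>i<(2::nat)^J. exp (t * (\<Sum>k<J. c k * rad k i))) \<le> 2^J * exp (t^2 * (\<Sum>k<J. (c k)^2) / 2)"
proof -
  have "(\<Prod>k<J. exp (t * c k) + exp (- (t * c k))) \<le> (\<Prod>k<J. 2 * exp ((t * c k)^2 / 2))"
    by (intro prod_mono) (auto simp: cosh_bound add_nonneg_nonneg)
  also have "\<dots> = 2^J * (\<Prod>k<J. exp ((t * c k)^2 / 2))"
    by (simp add: prod.distrib)
  also have "(\<Prod>k<J. exp ((t * c k)^2 / 2)) = exp (\<Sum>k<J. (t * c k)^2 / 2)"
    by (rule exp_sum[symmetric]) simp
  also have "(\<Sum>k<J. (t * c k)^2 / 2) = t^2 * (\<Sum>k<J. (c k)^2) / 2"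
    by (simp add: sum_divide_distrib sum_distrib_left power_mult_distrib)
  finally show ?thesis by (simp add: rad_exp_sum)
qed



lemma powr_le_exp:
  assumes "p > 0"
  obtains K :: real where "K > 0" "\<And>x. x \<ge> 0 \<Longrightarrow> x powr p \<le> K * exp x"
proof -
  define m where "m = nat \<lceil>p\<rceil> + 1"
  have m0: "m > 0" and pm: "p \<le> real m" unfolding m_def using assms by (auto, linarith)
  define K :: real where "K = real m ^ m"
  have K1: "K \<ge> 1" unfolding K_def using m0 by (simp add: one_le_power)
  have Kb: "x powr p \<le> K * exp x" if x: "x \<ge> 0" for x
  proof (cases "x \<le> 1")
    case True
    have "x powr p \<le> 1" using powr_mono2[of p x 1] True x assms by simp
    also have "1 \<le> exp x" using x by simp
    also have "exp x \<le> K * exp x" using K1 by simp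
    finally show ?thesis .
  next
    case False
    have "x powr p \<le> x powr real m" using False pm by (intro powr_mono) auto
    also have "\<dots> = x ^ m" using False by (simp add: powr_realpow)
    also have "x ^ m = K * (x / real m) ^ m" unfolding K_def using m0 by (simp add: power_divide)
    also have "(x / real m) ^ m \<le> (1 + x / real m) ^ m"
      using x m0 by (intro power_mono) auto
    also have "\<dots> \<le> exp x" using x m0 by (intro exp_ge_one_plus_x_over_n_power_n) auto
    finally show ?thesis using K1 by simp
  qed
  show ?thesis by (rule that[of K]) (use K1 Kb in auto)
qed

definition radf :: "nat \<Rightarrow> (nat \<Rightarrow> real) \<Rightarrow> nat \<Rightarrow> real" where
  "radf J c i = (\<Sum>k<J. c k * rad k i)"

lemma radf_upper:
  assumes "p > 0"
  obtains C :: real where "C > 0"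
    "\<And>J c. (\<Sum>k<J. (c k)^2) > 0 \<Longrightarrow>
        (\<Sum>i<(2::nat)^J. \<bar>radf J c i\<bar> powr p) \<le> C * 2^J * sqrt (\<Sum>k<J. (c k)^2) powr p"
proof -
  obtain K where K: "K > 0" "\<And>x. x \<ge> 0 \<Longrightarrow> x powr p \<le> K * exp x"
    using powr_le_exp[OF assms] by blast
  define C where "C = K * 2 * exp (1/2)"
  have "(\<Sum>i<(2::nat)^J. \<bar>radf J c i\<bar> powr p) \<le> C * 2^J * sqrt (\<Sum>k<J. (c k)^2) powr p"
    if S: "(\<Sum>k<J. (c k)^2) > 0" for J c
  proof -
    define s where "s = sqrt (\<Sum>k<J. (c k)^2)"
    have s0: "s > 0" using S by (simp add: s_def)
    have s2: "s^2 = (\<Sum>k<J. (c k)^2)" using S by (simp add: s_def)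
    have pt: "\<bar>radf J c i\<bar> powr p \<le> s powr p * K * (exp ((1/s) * radf J c i) + exp ((-1/s) * radf J c i))" for i
    proof -
      have "\<bar>radf J c i\<bar> = s * \<bar>radf J c i / s\<bar>" using s0 by simp
      then have "\<bar>radf J c i\<bar> powr p = s powr p * \<bar>radf J c i / s\<bar> powr p"
        using s0 by (metis abs_ge_zero less_imp_le powr_mult)
      also have "\<bar>radf J c i / s\<bar> powr p \<le> K * exp \<bar>radf J c i / s\<bar>" by (rule K(2)) simp
      also have "exp \<bar>radf J c i / s\<bar> \<le> exp ((1/s) * radf J c i) + exp ((-1/s) * radf J c i)"
        by (cases "radf J c i \<ge> 0") (auto simp: abs_if add_increasing add_increasing2)
      finally show ?thesis using s0 K by (simp add: mult.assoc mult_left_mono)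
    qed
    have e1: "(\<Sum>i<(2::nat)^J. exp (t * radf J c i)) \<le> 2^J * exp (1/2)" if "t^2 * s^2 = 1" for t
      using rad_exp_bound[where J=J and t=t and c=c] that s2 by (simp add: radf_def)
    have "(\<Sum>i<(2::nat)^J. \<bar>radf J c i\<bar> powr p)
        \<le> (\<Sum>i<(2::nat)^J. s powr p * K * (exp ((1/s) * radf J c i) + exp ((-1/s) * radf J c i)))"
      by (intro sum_mono pt)
    also have "\<dots> = s powr p * K * ((\<Sum>i<(2::nat)^J. exp ((1/s) * radf J c i)) + (\<Sum>i<(2::nat)^J. exp ((-1/s) * radf J c i)))"
      unfolding sum.distrib[symmetric] sum_distrib_left by (rule refl)
    also have "\<dots> \<le> s powr p * K * (2^J * exp (1/2) + 2^J * exp (1/2))"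
      using s0 K by (intro mult_left_mono add_mono e1) (auto simp: power_divide)
    also have "\<dots> = C * 2^J * s powr p" by (simp add: C_def)
    finally show ?thesis by (simp add: s_def)
  qed
  moreover have "C > 0" using K by (simp add: C_def)
  ultimately show ?thesis using that by blast
qed


lemma pz_point:
  fixes a th M q :: real
  assumes "a \<ge> 0" "th > 0" "M > 0" "q > 0"
  shows "a \<le> th + M / th powr q * a powr q + a^2 / M"
proof -
  have n1: "M / th powr q * a powr q \<ge> 0" using assms by simp
  have n2: "a^2 / M \<ge> 0" using assms by simp
  consider "a < th" | "th \<le> a" "a \<le> M" | "M < a" by linarith
  then show ?thesis
  proof cases
    case 1 then show ?thesis using n1 n2 by linarith
  next
    case 2
    have "th powr q \<le> a powr q" using 2 assms by (intro powr_mono2) auto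
    then have "M \<le> M / th powr q * a powr q" using assms
      by (simp add: field_simps)
    then show ?thesis using 2 n2 assms by linarith
  next
    case 3
    have "a * a / M \<ge> a" using 3 assms by (simp add: field_simps mult_right_mono)
    then have "a^2 / M \<ge> a" by (simp add: power2_eq_square)
    then show ?thesis using n1 assms by linarith
  qed
qed

lemma alg: "s \<noteq> 0 \<Longrightarrow> C \<noteq> 0 \<Longrightarrow>
  N * s^2 / 4 * (P * h) / (4 * C * s^2) = h / (16 * C) * N * (P::real)"
  by (simp add: field_simps power2_eq_square)

lemma radf_lower:
  assumes "p > 0"
  obtains L :: real where "L > 0"
    "\<And>J c. (\<Sum>k<J. (c k)^2) > 0 \<Longrightarrow>
        (\<Sum>i<(2::nat)^J. \<bar>radf J c i\<bar> powr p) \<ge> L * 2^J * sqrt (\<Sum>k<J. (c k)^2) powr p"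
proof -
  obtain C where C: "C > 0" "\<And>J c. (\<Sum>k<J. (c k)^2) > 0 \<Longrightarrow>
        (\<Sum>i<(2::nat)^J. \<bar>radf J c i\<bar> powr 4) \<le> C * 2^J * sqrt (\<Sum>k<J. (c k)^2) powr 4"
    using radf_upper[of 4] by auto
  define L where "L = (1/2) powr (p/2) / (16 * C)"
  have "(\<Sum>i<(2::nat)^J. \<bar>radf J c i\<bar> powr p) \<ge> L * 2^J * sqrt (\<Sum>k<J. (c k)^2) powr p"
    if S: "(\<Sum>k<J. (c k)^2) > 0" for J c
  proof -
    define s where "s = sqrt (\<Sum>k<J. (c k)^2)"
    have s0: "s > 0" using S by (simp add: s_def)
    have s2: "s^2 = (\<Sum>k<J. (c k)^2)" using S by (simp add: s_def)
    define th where "th = s^2 / 2"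
    define M where "M = 4 * C * s^2"
    have th0: "th > 0" and M0: "M > 0" using s0 C by (auto simp: th_def M_def)
    define N :: real where "N = 2^J"
    have N0: "N > 0" by (simp add: N_def)
    define S1 where "S1 = (\<Sum>i<(2::nat)^J. \<bar>radf J c i\<bar> powr p)"
    have sq: "(\<Sum>i<(2::nat)^J. (radf J c i)^2) = N * s^2"
      using rad_sq_sum[where J=J and c=c] s2 by (simp add: radf_def N_def)
    have q4: "\<bar>y\<bar> powr 4 = (y^2)^2" for y :: real
      by simp
    have qp: "\<bar>y\<bar> powr p = (y^2) powr (p/2)" for y :: real
      by (metis divide_inverse mult_1 powr_powr powr_powr_swap square_powr_half)
    have fourth: "(\<Sum>i<(2::nat)^J. ((radf J c i)^2)^2) \<le> C * N * s^4"
    proof -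
      have s4: "s powr 4 = s^4" using s0 by (simp add: powr_numeral)
      show ?thesis using C(2)[OF S] s4 unfolding s_def by (simp add: q4 N_def)
    qed
    have pt: "(radf J c i)^2 \<le> th + M / th powr (p/2) * \<bar>radf J c i\<bar> powr p + ((radf J c i)^2)^2 / M" for i
      unfolding qp using assms th0 M0 by (intro pz_point) auto
    have "N * s^2 \<le> (\<Sum>i<(2::nat)^J. th + M / th powr (p/2) * \<bar>radf J c i\<bar> powr p + ((radf J c i)^2)^2 / M)"
      unfolding sq[symmetric] by (intro sum_mono pt)
    also have "\<dots> = N * th + M / th powr (p/2) * S1 + (\<Sum>i<(2::nat)^J. ((radf J c i)^2)^2) / M"
      by (simp add: sum.distrib sum_distrib_left sum_divide_distrib S1_def N_def)
    also have "\<dots> \<le> N * th + M / th powr (p/2) * S1 + C * N * s^4 / M"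
      using fourth M0 by (intro add_left_mono divide_right_mono) auto
    also have "C * N * s^4 / M = N * s^2 / 4"
      using C s0 by (simp add: M_def field_simps power2_eq_square power4_eq_xxxx)
    finally have X: "N * s^2 \<le> N * th + M / th powr (p/2) * S1 + N * s^2 / 4" .
    have "N * th = N * s^2 / 2" by (simp add: th_def)
    then have "N * s^2 / 4 \<le> M / th powr (p/2) * S1" using X by linarith
    then have "N * s^2 / 4 * th powr (p/2) / M \<le> S1"
      using th0 M0 by (simp add: field_simps)
    moreover have "N * s^2 / 4 * th powr (p/2) / M = L * N * s powr p"
    proof -
      have "th powr (p/2) = (s^2) powr (p/2) * (1/2) powr (p/2)"
        using powr_mult[of "s^2" "1/2" "p/2"] by (simp add: th_def)
      also have "(s^2) powr (p/2) = s powr p"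
        using qp[of s] s0 by simp
      finally have e: "th powr (p/2) = s powr p * (1/2) powr (p/2)" .
      show ?thesis unfolding e L_def M_def
        using s0 C(1) by (intro alg) auto
    qed
    ultimately show ?thesis by (simp add: S1_def N_def s_def)
  qed
  moreover have "L > 0" using C by (simp add: L_def)
  ultimately show ?thesis using that by blast
qed



lemma ereal_pos_real: "0 < (p::ereal) \<Longrightarrow> p \<noteq> \<infinity> \<Longrightarrow> real_of_ereal p > 0"
  by (cases p) auto

lemma block_norm_cong:
  assumes "\<And>i. i < 2^j \<Longrightarrow> y i = z i"
  shows "block_norm p j y = block_norm p j z"
proof -
  have "(\<lambda>i. \<bar>y i\<bar>) ` {..<2^j} = (\<lambda>i. \<bar>z i\<bar>) ` {..<2^j}"
    using assms by (intro image_cong) auto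
  moreover have "(\<Sum>i<2^j. \<bar>y i\<bar> powr real_of_ereal p) = (\<Sum>i<2^j. \<bar>z i\<bar> powr real_of_ereal p)"
    using assms by (intro sum.cong) auto
  ultimately show ?thesis by (simp add: block_norm_def lp_norm_def)
qed

lemma block_norm_nonneg: "block_norm p j y \<ge> 0"
proof -
  have "lp_norm p (2^j) y \<ge> 0"
  proof (cases "p = \<infinity>")
    case True
    have "0 \<le> Max (insert 0 ((\<lambda>i. \<bar>y i\<bar>) ` {..<2^j}))"
      by (rule Max_ge) auto
    then show ?thesis using True by (simp add: lp_norm_def)
  qed (simp add: lp_norm_def)
  then show ?thesis by (simp add: block_norm_def)
qed

lemma block_norm_zero: "0 < p \<Longrightarrow> block_norm p j (\<lambda>i. 0) = 0"
proof (cases "p = \<infinity>")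
  case True
  have "(\<lambda>i. \<bar>0::real\<bar>) ` {..<(2::nat)^j} = {0}" by (auto intro!: image_eqI[where x=0])
  then show ?thesis using True by (simp add: block_norm_def lp_norm_def)
next
  case False
  assume "0 < p"
  then have "real_of_ereal p > 0" using False by (rule ereal_pos_real)
  then show ?thesis using False by (simp add: block_norm_def lp_norm_def)
qed

lemma block_norm_fin:
  assumes "p \<noteq> \<infinity>" "real_of_ereal p > 0"
  shows "block_norm p J y = ((\<Sum>i<(2::nat)^J. \<bar>y i\<bar> powr real_of_ereal p) / 2^J) powr (1 / real_of_ereal p)"
proof -
  define P where "P = real_of_ereal p"
  define S where "S = (\<Sum>i<(2::nat)^J. \<bar>y i\<bar> powr P)"
  have S0: "S \<ge> 0" by (simp add: S_def sum_nonneg)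
  have "(S / 2^J) powr (1/P) = S powr (1/P) / ((2^J) powr (1/P))"
    using S0 by (simp add: powr_divide)
  also have "(2::real)^J = 2 powr real J" by (simp add: powr_realpow)
  also have "(2 powr real J) powr (1/P) = 2 powr (real J / P)" by (simp add: powr_powr)
  also have "S powr (1/P) / 2 powr (real J / P) = 2 powr (- real J / P) * S powr (1/P)"
    by (simp add: powr_minus divide_inverse mult.commute)
  finally show ?thesis using assms(1)
    by (simp add: block_norm_def lp_norm_def S_def P_def powr_realpow)
qed

definition emb :: "nat \<Rightarrow> (nat \<Rightarrow> real) \<Rightarrow> nat \<Rightarrow> nat \<Rightarrow> real" where
  "emb J y = (\<lambda>j i. if j = J \<and> i < 2^J then y i else 0)"

lemma block_norm_emb:
  assumes "0 < p"
  shows "block_norm p j (emb J y j) = (if j = J then block_norm p J y else 0)"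
proof (cases "j = J")
  case True
  then show ?thesis by (simp add: emb_def, intro block_norm_cong) auto
next
  case False
  then have "emb J y j = (\<lambda>i. 0)" by (simp add: emb_def fun_eq_iff)
  then show ?thesis using False block_norm_zero[OF assms] by simp
qed

lemma emb_mixed:
  assumes "A \<le> J" "0 < p" "0 < q"
  shows "emb J y \<in> mixed_space p q A \<and> mixed_norm p q A (emb J y) = ereal (block_norm p J y)"
proof -
  define b where "b = block_norm p J y"
  have b0: "b \<ge> 0" by (simp add: b_def block_norm_nonneg)
  have supp: "\<forall>j i. (j < A \<or> 2 ^ j \<le> i) \<longrightarrow> emb J y j i = 0"
    using assms(1) by (auto simp: emb_def)
  show ?thesis
  proof (cases "q = \<infinity>")
    case True
    define T where "T = {block_norm p j (emb J y j) | j. A \<le> j}"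
    have T1: "T \<subseteq> {0, b}" using block_norm_emb[OF assms(2)] by (auto simp: T_def b_def)
    have T2: "b \<in> T" unfolding T_def b_def using assms(1) block_norm_emb[OF assms(2), of J J y]
      by force
    have bdd: "bdd_above T" using T1 by (meson bdd_above_empty bdd_above_insert bdd_above_mono)
    have "Sup T = b"
      by (rule cSup_eq_maximum[OF T2]) (use T1 b0 in auto)
    moreover have "emb J y \<in> mixed_space p q A"
      using supp bdd True by (simp add: mixed_space_def T_def)
    ultimately show ?thesis using True by (simp add: mixed_norm_def T_def b_def)
  next
    case False
    define Q where "Q = real_of_ereal q"
    have Q0: "Q > 0" unfolding Q_def using assms(3) False by (rule ereal_pos_real)
    have g: "(\<lambda>j. block_norm p (j + A) (emb J y (j + A)) powr Q) = (\<lambda>j. if j = J - A then b powr Q else 0)"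
      using assms(1) Q0 by (auto simp: fun_eq_iff block_norm_emb[OF assms(2)] b_def)
    have s: "(\<lambda>j. block_norm p (j + A) (emb J y (j + A)) powr Q) sums (b powr Q)"
      unfolding g using sums_single[of "J - A" "\<lambda>_. b powr Q"] by simp
    have mem: "emb J y \<in> mixed_space p q A"
      using supp False s by (auto simp: mixed_space_def Q_def sums_iff)
    have "(b powr Q) powr (1/Q) = b" using Q0 b0 by (simp add: powr_powr)
    then show ?thesis using mem False s by (simp add: mixed_norm_def sums_iff Q_def b_def)
  qed
qed

lemma radf_cc: "n \<le> J \<Longrightarrow> radf J (\<lambda>k. if k < n then c k else 0) i = (\<Sum>k<n. c k * rad k i)"
  unfolding radf_def
  by (rule sum.mono_neutral_cong_right) auto

lemma bern_lower:
  assumes p0: "0 < p0" and p1: "0 < p1" and q0: "0 < q0" and q1: "0 < q1"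
    and H: "\<And>J c. A \<le> J \<Longrightarrow> block_norm p0 J (radf J c) = 1 \<Longrightarrow> block_norm p1 J (radf J c) \<ge> c0"
  shows "bernstein (mixed_space p0 q0 A) (mixed_norm p0 q0 A) (mixed_norm p1 q1 A) (\<lambda>x. x) n \<ge> ereal c0"
proof -
  define J where "J = n + A"
  have AJ: "A \<le> J" and nJ: "n \<le> J" by (auto simp: J_def)
  define v where "v k = emb J (rad k)" for k
  define cc where "cc c = (\<lambda>k. if k < n then c k else 0)" for c :: "nat \<Rightarrow> real"
  define X where "X = {(\<lambda>j i. \<Sum>k<n. c k * v k j i) | c. True}"
  have elem: "(\<lambda>j i. \<Sum>k<n. c k * v k j i) = emb J (radf J (cc c))" for c
    using nJ by (auto simp: fun_eq_iff v_def emb_def cc_def radf_cc)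
  have indep: "\<forall>c. (\<forall>j i. (\<Sum>k<n. c k * v k j i) = 0) \<longrightarrow> (\<forall>k<n. c k = 0)"
  proof (rule allI, rule impI)
    fix c assume z: "\<forall>j i. (\<Sum>k<n. c k * v k j i) = 0"
    have "radf J (cc c) i = 0" if "i < 2^J" for i
      using z[rule_format, of J i] that nJ by (simp add: v_def emb_def radf_cc cc_def)
    then have "(\<Sum>i<(2::nat)^J. (radf J (cc c) i)^2) = 0" by simp
    then have "(\<Sum>k<J. (cc c k)^2) = 0" using rad_sq_sum[where J=J and c="cc c"] by (simp add: radf_def)
    then have "\<forall>k\<in>{..<J}. (cc c k)^2 = 0" by (subst (asm) sum_nonneg_eq_0_iff) auto
    then have "\<forall>k<J. (if k < n then c k else 0) = (0::real)" unfolding cc_def by simp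
    then show "\<forall>k<n. c k = 0" using nJ
      by (metis less_le_trans)
  qed
  have XD: "X \<subseteq> mixed_space p0 q0 A"
    using emb_mixed[OF AJ p0 q0] by (auto simp: X_def elem)
  have Xdim: "lin_subspace_dim X n"
    unfolding lin_subspace_dim_def X_def using indep by blast
  have "ereal c0 \<le> (INF x \<in> {x \<in> X. mixed_norm p0 q0 A x = 1}. mixed_norm p1 q1 A x)"
  proof (rule INF_greatest)
    fix x assume "x \<in> {x \<in> X. mixed_norm p0 q0 A x = 1}"
    then obtain c where x: "x = emb J (radf J (cc c))" and n1: "mixed_norm p0 q0 A x = 1"
      by (auto simp: X_def elem)
    have "block_norm p0 J (radf J (cc c)) = 1"
      using n1 emb_mixed[OF AJ p0 q0] x by (simp add: one_ereal_def)
    then have "block_norm p1 J (radf J (cc c)) \<ge> c0" by (rule H[OF AJ])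
    then show "ereal c0 \<le> mixed_norm p1 q1 A x"
      using emb_mixed[OF AJ p1 q1] x by simp
  qed
  also have "\<dots> \<le> bernstein (mixed_space p0 q0 A) (mixed_norm p0 q0 A) (mixed_norm p1 q1 A) (\<lambda>x. x) n"
    unfolding bernstein_def by (rule SUP_upper) (use XD Xdim in auto)
  finally show ?thesis .
qed



lemma key_case2:
  assumes "p1 < p0" "p0 \<noteq> \<infinity>" "0 < p1"
  obtains c0 :: real where "c0 > 0"
    "\<And>J c. block_norm p0 J (radf J c) = 1 \<Longrightarrow> block_norm p1 J (radf J c) \<ge> c0"
proof -
  have p1f: "p1 \<noteq> \<infinity>" using assms(1) by auto
  define P0 where "P0 = real_of_ereal p0"
  define P1 where "P1 = real_of_ereal p1"
  have P0: "P0 > 0" unfolding P0_def using assms by (intro ereal_pos_real) auto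
  have P1: "P1 > 0" unfolding P1_def using assms p1f by (intro ereal_pos_real) auto
  obtain C where C: "C > 0" "\<And>J c. (\<Sum>k<J. (c k)^2) > 0 \<Longrightarrow>
        (\<Sum>i<(2::nat)^J. \<bar>radf J c i\<bar> powr P0) \<le> C * 2^J * sqrt (\<Sum>k<J. (c k)^2) powr P0"
    using radf_upper[OF P0] by blast
  obtain L where L: "L > 0" "\<And>J c. (\<Sum>k<J. (c k)^2) > 0 \<Longrightarrow>
        (\<Sum>i<(2::nat)^J. \<bar>radf J c i\<bar> powr P1) \<ge> L * 2^J * sqrt (\<Sum>k<J. (c k)^2) powr P1"
    using radf_lower[OF P1] by blast
  define c0 where "c0 = L powr (1/P1) / C powr (1/P0)"
  have "block_norm p1 J (radf J c) \<ge> c0" if one: "block_norm p0 J (radf J c) = 1" for J c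
  proof -
    define S where "S = (\<Sum>k<J. (c k)^2)"
    have "S \<noteq> 0"
    proof
      assume "S = 0"
      then have "\<forall>k\<in>{..<J}. (c k)^2 = 0" unfolding S_def by (subst (asm) sum_nonneg_eq_0_iff) auto
      then have "radf J c = (\<lambda>i. 0)" by (auto simp: radf_def fun_eq_iff)
      then show False using one block_norm_zero[OF \<open>0 < p1\<close> ] block_norm_zero[of p0] assms by auto
    qed
    moreover have "S \<ge> 0" unfolding S_def by (simp add: sum_nonneg)
    ultimately have S0: "S > 0" by linarith
    define s where "s = sqrt S"
    have s0: "s > 0" using S0 by (simp add: s_def)
    define N :: real where "N = 2^J"
    have N0: "N > 0" by (simp add: N_def)
    define U where "U = (\<Sum>i<(2::nat)^J. \<bar>radf J c i\<bar> powr P0)"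
    define V where "V = (\<Sum>i<(2::nat)^J. \<bar>radf J c i\<bar> powr P1)"
    have U0: "U \<ge> 0" by (simp add: U_def sum_nonneg)
    have "1 = (U / N) powr (1/P0)"
      using one block_norm_fin[OF assms(2), of J "radf J c"] P0 by (simp add: U_def N_def P0_def)
    also have "\<dots> \<le> (C * s powr P0) powr (1/P0)"
    proof (rule powr_mono2)
      show "U / N \<le> C * s powr P0"
        using C(2)[of c J] S0 N0 by (simp add: U_def S_def s_def N_def field_simps)
    qed (use P0 U0 N0 in auto)
    also have "\<dots> = C powr (1/P0) * s"
      using C(1) s0 P0 by (simp add: powr_mult powr_powr)
    finally have le1: "1 \<le> C powr (1/P0) * s" .
    have "(L * s powr P1) powr (1/P1) \<le> (V / N) powr (1/P1)"
    proof (rule powr_mono2)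
      show "L * s powr P1 \<le> V / N"
        using L(2)[of c J] S0 N0 by (simp add: V_def S_def s_def N_def field_simps)
    qed (use P1 L(1) s0 in auto)
    also have "(V / N) powr (1/P1) = block_norm p1 J (radf J c)"
      using block_norm_fin[OF p1f, of J "radf J c"] P1 by (simp add: V_def N_def P1_def)
    finally have "L powr (1/P1) * s \<le> block_norm p1 J (radf J c)"
      using L(1) s0 P1 by (simp add: powr_mult powr_powr)
    moreover have "c0 \<le> L powr (1/P1) * s"
    proof -
      have "1 / C powr (1/P0) \<le> s" using le1 C(1) by (simp add: field_simps)
      then have "L powr (1/P1) * (1 / C powr (1/P0)) \<le> L powr (1/P1) * s"
        by (intro mult_left_mono) auto
      then show ?thesis by (simp add: c0_def)
    qed
    ultimately show ?thesis by linarith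
  qed
  moreover have "c0 > 0" using L(1) C(1) by (simp add: c0_def)
  ultimately show ?thesis using that by blast
qed

theorem proposition3p8:
  fixes p0 p1 q0 q1 :: ereal and A :: nat
  assumes "0 < p1" and "p1 \<le> p0"
    and "0 < q0" and "q0 < q1"
    and "\<not> (p0 = \<infinity> \<and> p1 < \<infinity>)"
  shows "\<not> finitely_strictly_singular (mixed_space p0 q0 A) (mixed_norm p0 q0 A)
            (mixed_norm p1 q1 A) (\<lambda>x. x)"
proof
  define b where "b = bernstein (mixed_space p0 q0 A) (mixed_norm p0 q0 A) (mixed_norm p1 q1 A) (\<lambda>x. x)"
  assume "finitely_strictly_singular (mixed_space p0 q0 A) (mixed_norm p0 q0 A) (mixed_norm p1 q1 A) (\<lambda>x. x)"
  then have lim: "b \<longlonglongrightarrow> 0" by (simp add: finitely_strictly_singular_def b_def)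
  have p0: "0 < p0" using assms by auto
  have q1: "0 < q1" using assms by auto
  obtain c0 :: real where c0: "c0 > 0"
    "\<And>J c. block_norm p0 J (radf J c) = 1 \<Longrightarrow> block_norm p1 J (radf J c) \<ge> c0"
  proof (cases "p1 = p0")
    case True
    show ?thesis by (rule that[of 1]) (use True in auto)
  next
    case False
    then have "p1 < p0" using assms(2) by auto
    moreover have "p0 \<noteq> \<infinity>" using assms(5) \<open>p1 < p0\<close> by auto
    ultimately show ?thesis using key_case2 assms(1) that by blast
  qed
  have bn: "b n \<ge> ereal c0" for n
    unfolding b_def using bern_lower[OF p0 assms(1) assms(3) q1, of A c0] c0(2) by blast
  have "eventually (\<lambda>n. b n < ereal c0) sequentially"
    using lim c0(1) by (intro order_tendstoD(2)) auto
  then obtain n where "b n < ereal c0" by (auto simp: eventually_sequentially)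
  then show False using bn[of n] by simp
qed


end
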